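(* Let $G$ be a finite graph, and let $L$ be an induced subgraph of $G$. Let $\mathcal{F}$ be a set of connected subgraphs of $L$. Let $k,\theta\in\mathbb{N}$ and $r,r',\xi,\eta\in\mathbb{R}_{\ge0}$ with $r'\ge r/2$. Let $Z$ be a subset of $V(G)$ with $N_G(V(L))\subseteq Z$ such that $Z$ is $(\xi,\eta)$-centered in $G$. If $L$ does not contain $k$ members of $\mathcal{F}$ pairwise at distance in $G$ at least $r$, then either 1. there exists $Z^*\subseteq V(G)$ with $N_G^{\le r'}[Z]\subseteq Z^*\subseteq V(L)\cup N_G^{\le r'}[Z]$ such that $Z^*$ is $(\xi+3\theta-3,\eta+r')$-centered in $G$ and intersects all members of $\mathcal{F}$, and $Z^*\setminus N_G^{\le r'}[Z]$ is $(3\theta-3,r')$-centered in $G$, or 2. there exists a separation $(A^*,B^* )$ of $L$ of order less than $\theta$ such that each of $A^*-N_G^{\le r'}[V(A^*\cap B^* )]$ and $B^*-N_G^{\le r'}[V(A^*\cap B^* )]$ does not contain $k-1$ members of $\mathcal{F}-N_G^{\le r'}[Z]$ pairwise at distance in $G$ at least $r$, or 3. the set $\mathcal{T}$ consisting of all separations $(A,B)$ of $L$ of order less than $\theta$ such that $A-N_G^{\le r'}[V(A\cap B)]$ does not contain a member of $\mathcal{F}-N_G^{\le r'}[Z]$ but $B-N_G^{\le r'}[V(A\cap B)]$ contains a member of $\mathcal{F}-N_G^{\le r'}[Z]$ is a tangle in $L$ of order $\theta$.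
   Context: $\operatorname{dist}_G$ is graph distance in $G$, extended to sets and subgraphs by minima. $N_G^{\le r}[S]=\{v\in V(G):\operatorname{dist}_G(v,S)\le r\}$, $N_G(S)=N_G^{\le1}[S]\setminus S$. A set $Z$ is $(k,r)$-centered in $G$ if $Z\subseteq N_G^{\le r}[W]$ for some $W$ with $|W|\le k$. For a subgraph $A$ and vertex set $S$, $A-S$ is the subgraph obtained by deleting the vertices of $S\cap V(A)$. For a set $\mathcal{F}$ of subgraphs and $S\subseteq V(G)$, $\mathcal{F}-S$ is the set of members of $\mathcal{F}$ disjoint from $S$; "a subgraph contains a member of $\mathcal{F}$" means some member of $\mathcal{F}$ is a subgraph of it. A separation of a graph $L$ is a pair $(A,B)$ of edge-disjoint subgraphs with $A\cup B=L$; its order is $|V(A)\cap V(B)|$. A tangle in $L$ of order $\theta$ is a set $\mathcal{T}$ of separations of $L$ of order less than $\theta$ such that (T1) for every separation $(A,B)$ of $L$ of order less than $\theta$, $(A,B)\in\mathcal{T}$ or $(B,A)\in\mathcal{T}$; (T2) if $(A_i,B_i)\in\mathcal{T}$ for $i=1,2,3$ then $A_1\cup A_2\cup A_3\ne L$; (T3) if $(A,B)\in\mathcal{T}$ then $V(A)\ne V(L)$. *)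

theory Defs
  imports Main "HOL-Library.Extended_Real"
begin

text \<open>Finite simple graphs, represented as (vertex set, edge set); each edge is a
  2-element set of vertices. Subgraphs are again such pairs.\<close>

type_synonym 'a graph = "'a set \<times> 'a set set"

definition verts :: "'a graph \<Rightarrow> 'a set" where "verts G = fst G"
definition edges :: "'a graph \<Rightarrow> 'a set set" where "edges G = snd G"

definition is_graph :: "'a graph \<Rightarrow> bool" where
  "is_graph G \<longleftrightarrow> (\<forall>e\<in>edges G. \<exists>u v. u \<noteq> v \<and> e = {u, v} \<and> u \<in> verts G \<and> v \<in> verts G)"

definition finite_graph :: "'a graph \<Rightarrow> bool" where
  "finite_graph G \<longleftrightarrow> is_graph G \<and> finite (verts G)"

definition subgraph :: "'a graph \<Rightarrow> 'a graph \<Rightarrow> bool" where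
  "subgraph H G \<longleftrightarrow> is_graph H \<and> verts H \<subseteq> verts G \<and> edges H \<subseteq> edges G"

definition induced_subgraph :: "'a graph \<Rightarrow> 'a graph \<Rightarrow> bool" where
  "induced_subgraph H G \<longleftrightarrow> subgraph H G \<and> edges H = {e \<in> edges G. e \<subseteq> verts H}"

text \<open>A walk in G given as a nonempty vertex list; its length is the number of steps.\<close>
definition walk :: "'a graph \<Rightarrow> 'a list \<Rightarrow> bool" where
  "walk G xs \<longleftrightarrow> xs \<noteq> [] \<and> set xs \<subseteq> verts G \<and>
     (\<forall>i. Suc i < length xs \<longrightarrow> {xs ! i, xs ! Suc i} \<in> edges G)"

text \<open>dist_G(u,v) \<le> r (r real); false when there is no u-v walk (distance infinite).\<close>
definition dist_le :: "'a graph \<Rightarrow> 'a \<Rightarrow> 'a \<Rightarrow> real \<Rightarrow> bool" where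
  "dist_le G u v r \<longleftrightarrow> (\<exists>xs. walk G xs \<and> hd xs = u \<and> last xs = v \<and> real (length xs - 1) \<le> r)"

definition dist_less :: "'a graph \<Rightarrow> 'a \<Rightarrow> 'a \<Rightarrow> real \<Rightarrow> bool" where
  "dist_less G u v r \<longleftrightarrow> (\<exists>xs. walk G xs \<and> hd xs = u \<and> last xs = v \<and> real (length xs - 1) < r)"

text \<open>dist_G(X,Y) \<ge> r for vertex sets (minimum over pairs; infinite if no pair).\<close>
definition set_dist_ge :: "'a graph \<Rightarrow> 'a set \<Rightarrow> 'a set \<Rightarrow> real \<Rightarrow> bool" where
  "set_dist_ge G X Y r \<longleftrightarrow> \<not> (\<exists>u\<in>X. \<exists>v\<in>Y. dist_less G u v r)"

definition ball_nbhd :: "'a graph \<Rightarrow> real \<Rightarrow> 'a set \<Rightarrow> 'a set" where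
  "ball_nbhd G r S = {v \<in> verts G. \<exists>s\<in>S. dist_le G v s r}"

definition open_nbhd :: "'a graph \<Rightarrow> 'a set \<Rightarrow> 'a set" where
  "open_nbhd G S = ball_nbhd G 1 S - S"

definition centered :: "'a graph \<Rightarrow> real \<Rightarrow> real \<Rightarrow> 'a set \<Rightarrow> bool" where
  "centered G k r Z \<longleftrightarrow> (\<exists>W. finite W \<and> W \<subseteq> verts G \<and> real (card W) \<le> k \<and> Z \<subseteq> ball_nbhd G r W)"

text \<open>Connected graphs are nonempty (standard convention).\<close>
definition connected_graph :: "'a graph \<Rightarrow> bool" where
  "connected_graph H \<longleftrightarrow> verts H \<noteq> {} \<and>
     (\<forall>u\<in>verts H. \<forall>v\<in>verts H. \<exists>xs. walk H xs \<and> hd xs = u \<and> last xs = v)"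

definition del_verts :: "'a graph \<Rightarrow> 'a set \<Rightarrow> 'a graph" where
  "del_verts A S = (verts A - S, {e \<in> edges A. e \<inter> S = {}})"

definition fam_minus :: "'a graph set \<Rightarrow> 'a set \<Rightarrow> 'a graph set" where
  "fam_minus F S = {H \<in> F. verts H \<inter> S = {}}"

definition contains_member :: "'a graph \<Rightarrow> 'a graph set \<Rightarrow> bool" where
  "contains_member X F \<longleftrightarrow> (\<exists>H\<in>F. subgraph H X)"

definition contains_far_members :: "'a graph \<Rightarrow> 'a graph \<Rightarrow> 'a graph set \<Rightarrow> nat \<Rightarrow> real \<Rightarrow> bool" where
  "contains_far_members G X F k r \<longleftrightarrow>
     (\<exists>M. M \<subseteq> F \<and> finite M \<and> card M = k \<and> (\<forall>H\<in>M. subgraph H X) \<and>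
        (\<forall>H1\<in>M. \<forall>H2\<in>M. H1 \<noteq> H2 \<longrightarrow> set_dist_ge G (verts H1) (verts H2) r))"

definition graph_union :: "'a graph \<Rightarrow> 'a graph \<Rightarrow> 'a graph" where
  "graph_union A B = (verts A \<union> verts B, edges A \<union> edges B)"

definition separation :: "'a graph \<Rightarrow> 'a graph \<Rightarrow> 'a graph \<Rightarrow> bool" where
  "separation L A B \<longleftrightarrow> subgraph A L \<and> subgraph B L \<and> edges A \<inter> edges B = {} \<and>
     graph_union A B = L"

definition sep_order :: "'a graph \<Rightarrow> 'a graph \<Rightarrow> nat" where
  "sep_order A B = card (verts A \<inter> verts B)"

definition tangle :: "'a graph \<Rightarrow> nat \<Rightarrow> ('a graph \<times> 'a graph) set \<Rightarrow> bool" where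
  "tangle L \<theta> T \<longleftrightarrow>
     (\<forall>(A,B)\<in>T. separation L A B \<and> sep_order A B < \<theta>) \<and>
     (\<forall>A B. separation L A B \<and> sep_order A B < \<theta> \<longrightarrow> (A,B) \<in> T \<or> (B,A) \<in> T) \<and>
     (\<forall>A1 B1 A2 B2 A3 B3. (A1,B1) \<in> T \<and> (A2,B2) \<in> T \<and> (A3,B3) \<in> T \<longrightarrow>
        graph_union (graph_union A1 A2) A3 \<noteq> L) \<and>
     (\<forall>(A,B)\<in>T. verts A \<noteq> verts L)"

end

theory Submission imports Defs begin

lemma walk_Cons_Cons:
  "walk G (x # y # zs) \<longleftrightarrow> x \<in> verts G \<and> {x,y} \<in> edges G \<and> walk G (y # zs)"
proof
  assume w: "walk G (x # y # zs)"
  have e: "\<And>i. Suc i < length (x # y # zs) \<Longrightarrow> {(x#y#zs) ! i, (x#y#zs) ! Suc i} \<in> edges G"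
    using w unfolding walk_def by blast
  have "{x,y} \<in> edges G" using e[of 0] by simp
  moreover have "walk G (y # zs)" unfolding walk_def
  proof (intro conjI allI impI)
    show "set (y # zs) \<subseteq> verts G" using w unfolding walk_def by auto
  next
    fix i assume "Suc i < length (y # zs)"
    then show "{(y # zs) ! i, (y # zs) ! Suc i} \<in> edges G" using e[of "Suc i"] by simp
  qed simp
  ultimately show "x \<in> verts G \<and> {x,y} \<in> edges G \<and> walk G (y # zs)" using w unfolding walk_def by auto
next
  assume a: "x \<in> verts G \<and> {x,y} \<in> edges G \<and> walk G (y # zs)"
  show "walk G (x # y # zs)" unfolding walk_def
  proof (intro conjI allI impI)
    show "set (x # y # zs) \<subseteq> verts G" using a unfolding walk_def by auto
  next
    fix i assume i: "Suc i < length (x # y # zs)"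
    show "{(x # y # zs) ! i, (x # y # zs) ! Suc i} \<in> edges G"
    proof (cases i)
      case 0 then show ?thesis using a by simp
    next
      case (Suc j)
      then show ?thesis using a i unfolding walk_def by auto
    qed
  qed simp
qed

lemma walk_single: "walk G [x] \<longleftrightarrow> x \<in> verts G"
  by (auto simp: walk_def)

lemma walk_append:
  "walk G xs \<Longrightarrow> walk G ys \<Longrightarrow> last xs = hd ys \<Longrightarrow> walk G (xs @ tl ys)"
proof (induction xs)
  case Nil then show ?case by (simp add: walk_def)
next
  case (Cons a xs)
  show ?case
  proof (cases xs)
    case Nil
    then have "ys \<noteq> []" using Cons.prems by (simp add: walk_def)
    then show ?thesis using Nil Cons.prems by (cases ys) auto
  next
    case (Cons b rest)
    have wx: "walk G xs" using Cons.prems(1) \<open>xs = b # rest\<close> by (simp add: walk_Cons_Cons)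
    have "walk G (xs @ tl ys)" using Cons.IH[OF wx Cons.prems(2)] Cons.prems(3) \<open>xs = b # rest\<close> by simp
    then show ?thesis using Cons.prems(1) \<open>xs = b # rest\<close> by (simp add: walk_Cons_Cons)
  qed
qed

lemma walk_rev: "walk G xs \<Longrightarrow> walk G (rev xs)"
proof (induction xs rule: induct_list012)
  case 1 then show ?case by (simp add: walk_def)
next
  case (2 x) then show ?case by simp
next
  case (3 x y zs)
  have w1: "walk G (rev (y # zs))" using 3 by (simp add: walk_Cons_Cons)
  have w2: "walk G [y, x]" using 3 by (auto simp: walk_Cons_Cons walk_single insert_commute walk_def)
  have "walk G (rev (y # zs) @ tl [y, x])" using walk_append[OF w1 w2] by simp
  then show ?case by simp
qed

lemma first_change:
  "xs \<noteq> [] \<Longrightarrow> \<not> P (hd xs) \<Longrightarrow> P (last xs) \<Longrightarrow> \<exists>i. Suc i < length xs \<and> \<not> P (xs ! i) \<and> P (xs ! Suc i)"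
proof (induction xs)
  case Nil then show ?case by simp
next
  case (Cons a xs)
  show ?case
  proof (cases "xs = []")
    case True then show ?thesis using Cons.prems by simp
  next
    case False
    show ?thesis
    proof (cases "P (hd xs)")
      case True
      then show ?thesis using False Cons.prems by (intro exI[of _ 0]) (auto simp: hd_conv_nth)
    next
      case nP: False
      obtain i where "Suc i < length xs" "\<not> P (xs ! i)" "P (xs ! Suc i)"
        using Cons.IH[OF False nP] Cons.prems False by auto
      then show ?thesis by (intro exI[of _ "Suc i"]) simp
    qed
  qed
qed

lemma walk_take:
  assumes w: "walk G xs" and n: "0 < n" shows "walk G (take n xs)"
  unfolding walk_def
proof (intro conjI allI impI)
  show "take n xs \<noteq> []" using w n by (simp add: walk_def)
  show "set (take n xs) \<subseteq> verts G" using w set_take_subset[of n xs] unfolding walk_def by blast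
  fix i assume i: "Suc i < length (take n xs)"
  then have "take n xs ! i = xs ! i" "take n xs ! Suc i = xs ! Suc i" "Suc i < length xs" by auto
  then show "{take n xs ! i, take n xs ! Suc i} \<in> edges G" using w by (simp add: walk_def)
qed

lemma walk_drop:
  assumes w: "walk G xs" and n: "n < length xs" shows "walk G (drop n xs)"
  unfolding walk_def
proof (intro conjI allI impI)
  show "drop n xs \<noteq> []" using n by simp
  show "set (drop n xs) \<subseteq> verts G" using w set_drop_subset[of n xs] unfolding walk_def by blast
  fix i assume i: "Suc i < length (drop n xs)"
  then have "drop n xs ! i = xs ! (n + i)" "drop n xs ! Suc i = xs ! Suc (n + i)" "Suc (n + i) < length xs" by auto
  then show "{drop n xs ! i, drop n xs ! Suc i} \<in> edges G" using w unfolding walk_def by presburger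
qed

lemma dist_le_refl: "v \<in> verts G \<Longrightarrow> r \<ge> 0 \<Longrightarrow> dist_le G v v r"
  unfolding dist_le_def by (intro exI[of _ "[v]"]) (simp add: walk_single)

lemma dist_le_sym: "dist_le G u v r \<Longrightarrow> dist_le G v u r"
  unfolding dist_le_def
  apply clarify
  subgoal for xs
    apply (intro exI[of _ "rev xs"])
    apply (auto simp: walk_rev hd_rev last_rev)
    done
  done

lemma dist_le_mono: "dist_le G u v a \<Longrightarrow> a \<le> b \<Longrightarrow> dist_le G u v b"
  unfolding dist_le_def by force

lemma dist_le_trans: "dist_le G u v a \<Longrightarrow> dist_le G v w b \<Longrightarrow> dist_le G u w (a + b)"
proof -
  assume "dist_le G u v a" "dist_le G v w b"
  then obtain xs ys where x: "walk G xs" "hd xs = u" "last xs = v" "real (length xs - 1) \<le> a"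
    and y: "walk G ys" "hd ys = v" "last ys = w" "real (length ys - 1) \<le> b"
    unfolding dist_le_def by blast
  have ne: "xs \<noteq> []" "ys \<noteq> []" using x y by (auto simp: walk_def)
  have w: "walk G (xs @ tl ys)" using walk_append[OF x(1) y(1)] x(3) y(2) by simp
  have "hd (xs @ tl ys) = u" using ne x by simp
  moreover have "last (xs @ tl ys) = w"
  proof (cases "tl ys = []")
    case True
    then show ?thesis using x y ne by (cases ys) auto
  next
    case False
    then show ?thesis using y ne by (cases ys) auto
  qed
  moreover have "real (length (xs @ tl ys) - 1) \<le> a + b"
  proof -
    obtain n m where "length xs = Suc n" "length ys = Suc m" using ne
      by (metis length_greater_0_conv Suc_pred)
    then have "length (xs @ tl ys) - 1 = (length xs - 1) + (length ys - 1)"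
      by (simp add: length_tl)
    then show ?thesis using x y by simp
  qed
  ultimately show ?thesis unfolding dist_le_def using w by (intro exI[of _ "xs @ tl ys"]) simp
qed

lemma dist_split:
  assumes w: "walk G xs" and i: "i < length xs"
  shows "dist_le G (hd xs) (xs ! i) (real i) \<and> dist_le G (xs ! i) (last xs) (real (length xs - 1 - i))"
proof
  have "walk G (take (Suc i) xs)" using walk_take[OF w] by simp
  moreover have "hd (take (Suc i) xs) = hd xs" using i by (cases xs) auto
  moreover have "last (take (Suc i) xs) = xs ! i" using i
    by (simp add: take_Suc_conv_app_nth)
  moreover have "length (take (Suc i) xs) - 1 = i" using i by simp
  ultimately show "dist_le G (hd xs) (xs ! i) (real i)" unfolding dist_le_def by (metis order_refl)
next
  have "walk G (drop i xs)" using walk_drop[OF w i] .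
  moreover have "hd (drop i xs) = xs ! i" using i by (simp add: hd_drop_conv_nth)
  moreover have "last (drop i xs) = last xs" using i by simp
  moreover have "length (drop i xs) - 1 = length xs - 1 - i" by simp
  ultimately show "dist_le G (xs ! i) (last xs) (real (length xs - 1 - i))" unfolding dist_le_def by (metis order_refl)
qed

lemma edge_dist: "{u, v} \<in> edges G \<Longrightarrow> u \<in> verts G \<Longrightarrow> v \<in> verts G \<Longrightarrow> dist_le G u v 1"
  unfolding dist_le_def by (intro exI[of _ "[u, v]"]) (simp add: walk_Cons_Cons walk_single)

lemma edge_verts:
  assumes "is_graph G" "e \<in> edges G" "x \<in> e" shows "x \<in> verts G"
proof -
  obtain u v where "e = {u, v}" "u \<in> verts G" "v \<in> verts G"
    using assms(1,2) unfolding is_graph_def by blast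
  then show ?thesis using assms(3) by auto
qed

lemma sep_facts:
  assumes "separation L A B"
  shows "verts L = verts A \<union> verts B" "edges L = edges A \<union> edges B" "is_graph A" "is_graph B"
    "separation L B A"
proof -
  have L: "L = (verts A \<union> verts B, edges A \<union> edges B)" and s: "subgraph A L" "subgraph B L"
    "edges A \<inter> edges B = {}"
    using assms unfolding separation_def graph_union_def by auto
  show "verts L = verts A \<union> verts B" by (subst L) (simp add: verts_def)
  show "edges L = edges A \<union> edges B" by (subst L) (simp add: edges_def)
  show "is_graph A" "is_graph B" using s unfolding subgraph_def by auto
  show "separation L B A" using assms unfolding separation_def graph_union_def
    by (simp add: Un_commute Int_commute)
qed


lemma walk_verts: "walk G xs \<Longrightarrow> i < length xs \<Longrightarrow> xs ! i \<in> verts G"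
  unfolding walk_def using nth_mem by blast

lemma walk_edge: "walk G xs \<Longrightarrow> Suc i < length xs \<Longrightarrow> {xs ! i, xs ! Suc i} \<in> edges G"
  unfolding walk_def by blast

lemma ball_self: "S \<subseteq> verts G \<Longrightarrow> r \<ge> 0 \<Longrightarrow> S \<subseteq> ball_nbhd G r S"
proof
  fix x assume "S \<subseteq> verts G" "r \<ge> 0" "x \<in> S"
  then have xG: "x \<in> verts G" by blast
  have "dist_le G x x r" using dist_le_refl[OF xG \<open>r \<ge> 0\<close>] .
  note this xG
  then show "x \<in> ball_nbhd G r S" using \<open>x \<in> S\<close> unfolding ball_nbhd_def by blast
qed

lemma ball_mono_set: "S \<subseteq> T \<Longrightarrow> ball_nbhd G r S \<subseteq> ball_nbhd G r T"
  unfolding ball_nbhd_def by blast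

lemma ball_mono_rad: "a \<le> b \<Longrightarrow> ball_nbhd G a S \<subseteq> ball_nbhd G b S"
  unfolding ball_nbhd_def using dist_le_mono by (smt (verit) Collect_mono_iff)

lemma ball_ball: "Z \<subseteq> ball_nbhd G e W \<Longrightarrow> ball_nbhd G a Z \<subseteq> ball_nbhd G (e + a) W"
  unfolding ball_nbhd_def
proof clarify
  fix x z assume Z: "Z \<subseteq> {v \<in> verts G. \<exists>s\<in>W. dist_le G v s e}" and x: "x \<in> verts G" "z \<in> Z" "dist_le G x z a"
  then obtain w where "w \<in> W" "dist_le G z w e" by blast
  then have "dist_le G x w (a + e)" using dist_le_trans[OF x(3)] by blast
  then show "\<exists>s\<in>W. dist_le G x s (e + a)" using \<open>w \<in> W\<close> by (auto simp: add.commute)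
qed

lemma cross:
  assumes ind: "induced_subgraph L G" and sep: "separation L A B"
    and nb: "open_nbhd G (verts L) \<subseteq> Z"
    and w: "walk G xs" and h: "hd xs \<in> verts A - verts A \<inter> verts B"
    and l: "last xs \<notin> verts A - verts A \<inter> verts B"
  shows "\<exists>i<length xs. xs ! i \<in> (verts A \<inter> verts B) \<union> Z"
proof -
  let ?S = "verts A \<inter> verts B"
  have ne: "xs \<noteq> []" using w by (simp add: walk_def)
  obtain i where i: "Suc i < length xs" "xs ! i \<in> verts A - ?S" "xs ! Suc i \<notin> verts A - ?S"
    using first_change[of xs "\<lambda>x. x \<notin> verts A - ?S"] ne h l by auto
  let ?y = "xs ! Suc i"
  have e: "{xs ! i, ?y} \<in> edges G" using walk_edge[OF w i(1)] .
  have sf: "verts L = verts A \<union> verts B" "edges L = edges A \<union> edges B" "is_graph A" "is_graph B"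
    using sep_facts[OF sep] by auto
  have yG: "?y \<in> verts G" using walk_verts[OF w i(1)] .
  have xG: "xs ! i \<in> verts G" using walk_verts[OF w] i(1) by simp
  show ?thesis
  proof (cases "?y \<in> ?S")
    case True then show ?thesis using i(1) by blast
  next
    case nS: False
    show ?thesis
    proof (cases "?y \<in> verts L")
      case False
      have "dist_le G ?y (xs ! i) 1" using edge_dist[of ?y "xs ! i" G] e yG xG by (simp add: insert_commute)
      then have "?y \<in> ball_nbhd G 1 (verts L)" using yG i(2) sf(1) unfolding ball_nbhd_def by blast
      then have "?y \<in> Z" using nb False unfolding open_nbhd_def by blast
      then show ?thesis using i(1) by blast
    next
      case True
      have yB: "?y \<in> verts B - verts A" using True nS i(3) sf(1) by blast
      have "{xs ! i, ?y} \<subseteq> verts L" using True i(2) sf(1) by blast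
      then have "{xs ! i, ?y} \<in> edges L" using ind e unfolding induced_subgraph_def by blast
      then have "{xs ! i, ?y} \<in> edges A \<or> {xs ! i, ?y} \<in> edges B" using sf(2) by blast
      then show ?thesis
      proof
        assume "{xs ! i, ?y} \<in> edges A"
        then have "?y \<in> verts A" using edge_verts[OF sf(3)] by blast
        then show ?thesis using yB by blast
      next
        assume "{xs ! i, ?y} \<in> edges B"
        then have "xs ! i \<in> verts B" using edge_verts[OF sf(4)] by blast
        then show ?thesis using i(2) by blast
      qed
    qed
  qed
qed

lemma far:
  assumes ind: "induced_subgraph L G" and sep: "separation L A B"
    and nb: "open_nbhd G (verts L) \<subseteq> Z" and rr: "r' \<ge> r / 2" "r' \<ge> 0"
    and SG: "verts A \<inter> verts B \<subseteq> verts G"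
    and u: "u \<in> verts A" "u \<notin> ball_nbhd G r' (verts A \<inter> verts B)" "u \<notin> ball_nbhd G r' Z"
    and v: "v \<in> verts B" "v \<notin> ball_nbhd G r' (verts A \<inter> verts B)" "v \<notin> ball_nbhd G r' Z"
  shows "\<not> dist_less G u v r"
proof
  let ?S = "verts A \<inter> verts B"
  assume "dist_less G u v r"
  then obtain xs where x: "walk G xs" "hd xs = u" "last xs = v" "real (length xs - 1) < r"
    unfolding dist_less_def by blast
  have Sb: "?S \<subseteq> ball_nbhd G r' ?S" using ball_self[OF SG rr(2)] .
  have "u \<in> verts A - ?S" using u Sb by blast
  then have "hd xs \<in> verts A - ?S" using x(2) by simp
  moreover have "v \<notin> verts A - ?S" using v Sb by blast
  then have "last xs \<notin> verts A - ?S" using x(3) by simp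
  ultimately obtain i where i: "i < length xs" "xs ! i \<in> ?S \<union> Z" using cross[OF ind sep nb x(1)] by blast
  have d: "dist_le G u (xs ! i) (real i)" "dist_le G (xs ! i) v (real (length xs - 1 - i))"
    using dist_split[OF x(1) i(1)] x(2,3) by simp_all
  have ne: "xs \<noteq> []" using x(1) by (simp add: walk_def)
  have sx: "set xs \<subseteq> verts G" using x(1) by (simp add: walk_def)
  have "hd xs \<in> verts G" "last xs \<in> verts G" using sx hd_in_set[OF ne] last_in_set[OF ne]
    by (auto simp del: hd_in_set last_in_set)
  then have uG: "u \<in> verts G" "v \<in> verts G" using x(2,3) by simp_all
  have "i + (length xs - 1 - i) = length xs - 1" using i(1) by linarith
  then have sum: "real i + real (length xs - 1 - i) = real (length xs - 1)" by (metis of_nat_add)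
  have bu: "ball_nbhd G r' (?S \<union> Z) = ball_nbhd G r' ?S \<union> ball_nbhd G r' Z"
    unfolding ball_nbhd_def by blast
  show False
  proof (cases "real i \<le> r'")
    case True
    have "dist_le G u (xs ! i) r'" using dist_le_mono[OF d(1) True] .
    then have "u \<in> ball_nbhd G r' (?S \<union> Z)" using i(2) uG(1) unfolding ball_nbhd_def by blast
    then show False using u(2,3) bu by blast
  next
    case False
    then have le: "real (length xs - 1 - i) \<le> r'" using sum x(4) rr by linarith
    have "dist_le G (xs ! i) v r'" using dist_le_mono[OF d(2) le] .
    then have "dist_le G v (xs ! i) r'" by (rule dist_le_sym)
    then have "v \<in> ball_nbhd G r' (?S \<union> Z)" using i(2) uG(2) unfolding ball_nbhd_def by blast
    then show False using v(2,3) bu by blast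
  qed
qed


lemma verts_del[simp]: "verts (del_verts A S) = verts A - S"
  by (simp add: del_verts_def verts_def)
lemma edges_del[simp]: "edges (del_verts A S) = {e \<in> edges A. e \<inter> S = {}}"
  by (simp add: del_verts_def edges_def)

lemma far_sets:
  assumes ind: "induced_subgraph L G" and sep: "separation L A B"
    and nb: "open_nbhd G (verts L) \<subseteq> Z" and rr: "r' \<ge> r / 2" "r' \<ge> 0"
    and SG: "verts A \<inter> verts B \<subseteq> verts G"
    and X: "X \<subseteq> verts A - ball_nbhd G r' (verts A \<inter> verts B)" "X \<inter> ball_nbhd G r' Z = {}"
    and Y: "Y \<subseteq> verts B - ball_nbhd G r' (verts A \<inter> verts B)" "Y \<inter> ball_nbhd G r' Z = {}"
  shows "set_dist_ge G X Y r"
  unfolding set_dist_ge_def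
proof clarify
  fix u v assume "u \<in> X" "v \<in> Y" "dist_less G u v r"
  moreover have "\<not> dist_less G u v r"
    by (rule far[OF ind sep nb rr SG]) (use X Y \<open>u \<in> X\<close> \<open>v \<in> Y\<close> in blast)+
  ultimately show False by blast
qed

lemma combine:
  assumes ind: "induced_subgraph L G" and sep: "separation L A B"
    and nb: "open_nbhd G (verts L) \<subseteq> Z" and rr: "r' \<ge> r / 2" "r' \<ge> 0"
    and SG: "verts A \<inter> verts B \<subseteq> verts G"
    and FH: "\<forall>H\<in>F. subgraph H L \<and> connected_graph H"
    and k: "k \<ge> 1"
    and fA: "contains_far_members G (del_verts A (ball_nbhd G r' (verts A \<inter> verts B))) (fam_minus F (ball_nbhd G r' Z)) (k - 1) r"
    and cB: "contains_member (del_verts B (ball_nbhd G r' (verts A \<inter> verts B))) (fam_minus F (ball_nbhd G r' Z))"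
  shows "contains_far_members G L F k r"
proof -
  let ?S = "verts A \<inter> verts B"
  let ?N = "ball_nbhd G r' ?S"
  let ?F' = "fam_minus F (ball_nbhd G r' Z)"
  obtain M where M: "M \<subseteq> ?F'" "finite M" "card M = k - 1" "\<forall>H\<in>M. subgraph H (del_verts A ?N)"
     "\<forall>H1\<in>M. \<forall>H2\<in>M. H1 \<noteq> H2 \<longrightarrow> set_dist_ge G (verts H1) (verts H2) r"
    using fA unfolding contains_far_members_def by blast
  obtain HB where HB: "HB \<in> ?F'" "subgraph HB (del_verts B ?N)"
    using cB unfolding contains_member_def by blast
  have vA: "verts H \<subseteq> verts A - ?N" "verts H \<inter> ball_nbhd G r' Z = {}" if "H \<in> M" for H
    using M(1,4) that unfolding subgraph_def fam_minus_def by auto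
  have vB: "verts HB \<subseteq> verts B - ?N" "verts HB \<inter> ball_nbhd G r' Z = {}"
    using HB unfolding subgraph_def fam_minus_def by auto
  have HBF: "HB \<in> F" using HB(1) unfolding fam_minus_def by blast
  have MF: "M \<subseteq> F" using M(1) unfolding fam_minus_def by blast
  have "verts HB \<noteq> {}" using FH HBF unfolding connected_graph_def by blast
  then obtain x where x: "x \<in> verts HB" by blast
  have Sb: "?S \<subseteq> ?N" using ball_self[OF SG rr(2)] .
  have nin: "HB \<notin> M"
  proof
    assume "HB \<in> M"
    then have "x \<in> verts A - ?N" using vA x by blast
    moreover have "x \<in> verts B - ?N" using vB x by blast
    ultimately show False using Sb by blast
  qed
  have sep': "separation L B A" using sep_facts(5)[OF sep] .
  have SG': "verts B \<inter> verts A \<subseteq> verts G" using SG by blast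
  show ?thesis unfolding contains_far_members_def
  proof (intro exI[of _ "insert HB M"] conjI ballI impI)
    show "insert HB M \<subseteq> F" using MF HBF by blast
    show "finite (insert HB M)" using M(2) by simp
    show "card (insert HB M) = k" using M(2,3) nin k by simp
    fix H assume "H \<in> insert HB M"
    then show "subgraph H L" using MF HBF FH by blast
  next
    fix H1 H2 assume h: "H1 \<in> insert HB M" "H2 \<in> insert HB M" "H1 \<noteq> H2"
    show "set_dist_ge G (verts H1) (verts H2) r"
    proof (cases "H1 = HB")
      case True
      then have "H2 \<in> M" using h by blast
      show ?thesis unfolding True
        by (rule far_sets[OF ind sep' nb rr SG'])
          (use vB vA[OF \<open>H2 \<in> M\<close>] in \<open>auto simp: Int_commute\<close>)
    next
      case False
      then have "H1 \<in> M" using h by blast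
      show ?thesis
      proof (cases "H2 = HB")
        case True
        show ?thesis unfolding True
          by (rule far_sets[OF ind sep nb rr SG]) (use vB vA[OF \<open>H1 \<in> M\<close>] in auto)
      next
        case False
        then have "H2 \<in> M" using h by blast
        then show ?thesis using M(5) \<open>H1 \<in> M\<close> h(3) by blast
      qed
    qed
  qed
qed

lemma side_aux:
  assumes sep: "separation L A B" and HL: "subgraph H L" and con: "connected_graph H"
    and dis: "verts H \<inter> (verts A \<inter> verts B) = {}" and h0: "h0 \<in> verts H" "h0 \<in> verts A"
  shows "verts H \<subseteq> verts A \<and> edges H \<subseteq> edges A"
proof -
  have sf: "verts L = verts A \<union> verts B" "edges L = edges A \<union> edges B" "is_graph A" "is_graph B"
    using sep_facts[OF sep] by auto
  have gH: "is_graph H" "edges H \<subseteq> edges L" "verts H \<subseteq> verts L" using HL unfolding subgraph_def by auto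
  have V: "verts H \<subseteq> verts A"
  proof
    fix v assume v: "v \<in> verts H"
    show "v \<in> verts A"
    proof (rule ccontr)
      assume nv: "v \<notin> verts A"
      obtain xs where xs: "walk H xs" "hd xs = h0" "last xs = v"
        using con v h0 unfolding connected_graph_def by blast
      have ne: "xs \<noteq> []" using xs(1) by (simp add: walk_def)
      have "\<not> (hd xs \<notin> verts A)" using xs(2) h0 by simp
      moreover have "last xs \<notin> verts A" using xs(3) nv by simp
      ultimately obtain i where i: "Suc i < length xs" "xs ! i \<in> verts A" "xs ! Suc i \<notin> verts A"
        using first_change[of xs "\<lambda>x. x \<notin> verts A"] ne by auto
      have e: "{xs ! i, xs ! Suc i} \<in> edges H" using walk_edge[OF xs(1) i(1)] .
      have xi: "xs ! i \<in> verts H" using walk_verts[OF xs(1)] i(1) by simp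
      have "{xs ! i, xs ! Suc i} \<in> edges A \<or> {xs ! i, xs ! Suc i} \<in> edges B" using e gH(2) sf(2) by blast
      then show False
      proof
        assume "{xs ! i, xs ! Suc i} \<in> edges A"
        then have "xs ! Suc i \<in> verts A" using edge_verts[OF sf(3)] by blast
        then show False using i(3) by blast
      next
        assume "{xs ! i, xs ! Suc i} \<in> edges B"
        then have "xs ! i \<in> verts B" using edge_verts[OF sf(4)] by blast
        then show False using i(2) xi dis by blast
      qed
    qed
  qed
  have E: "edges H \<subseteq> edges A"
  proof
    fix e assume e: "e \<in> edges H"
    then have "e \<subseteq> verts H" using edge_verts[OF gH(1)] by blast
    then have eB: "e \<inter> verts B = {}" using V dis by blast
    obtain a b where "e = {a, b}" using e gH(1) unfolding is_graph_def by blast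
    then have "e \<inter> verts B \<noteq> {}" if "e \<in> edges B" using edge_verts[OF sf(4) that] by blast
    then show "e \<in> edges A" using eB e gH(2) sf(2) by blast
  qed
  show ?thesis using V E by blast
qed

lemma side:
  assumes sep: "separation L A B" and HL: "subgraph H L" and con: "connected_graph H"
    and N: "verts A \<inter> verts B \<subseteq> N" and dis: "verts H \<inter> N = {}"
  shows "subgraph H (del_verts A N) \<or> subgraph H (del_verts B N)"
proof -
  have sf: "verts L = verts A \<union> verts B" "separation L B A" using sep_facts[OF sep] by auto
  have gH: "is_graph H" "verts H \<subseteq> verts L" using HL unfolding subgraph_def by auto
  obtain h0 where h0: "h0 \<in> verts H" using con unfolding connected_graph_def by blast
  have dS: "verts H \<inter> (verts A \<inter> verts B) = {}" using N dis by blast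
  have conc: "subgraph H (del_verts X N)" if "verts H \<subseteq> verts X \<and> edges H \<subseteq> edges X" for X
  proof -
    have "e \<subseteq> verts H" if "e \<in> edges H" for e using edge_verts[OF gH(1) that] by blast
    then show ?thesis unfolding subgraph_def using that dis gH(1) by auto
  qed
  show ?thesis
  proof (cases "h0 \<in> verts A")
    case True
    then show ?thesis using side_aux[OF sep HL con dS h0 True] conc by blast
  next
    case False
    then have "h0 \<in> verts B" using h0 gH(2) sf(1) by blast
    moreover have "verts H \<inter> (verts B \<inter> verts A) = {}" using dS by blast
    ultimately show ?thesis using side_aux[OF sf(2) HL con _ h0] conc by blast
  qed
qed


lemma outcome1:
  assumes fin: "finite_graph G" and ind: "induced_subgraph L G" and r': "r' \<ge> 0" and eta: "\<eta> \<ge> 0"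
    and nb: "open_nbhd G (verts L) \<subseteq> Z" and cZ: "centered G \<xi> \<eta> Z"
    and S: "S \<subseteq> verts L" and cS: "real (card S) \<le> c"
    and hit: "\<forall>H\<in>F. verts H \<inter> ball_nbhd G r' Z = {} \<longrightarrow> verts H \<inter> ball_nbhd G r' S \<noteq> {}"
  shows "\<exists>Zs. ball_nbhd G r' Z \<subseteq> Zs \<and> Zs \<subseteq> verts L \<union> ball_nbhd G r' Z \<and>
            centered G (\<xi> + c) (\<eta> + r') Zs \<and>
            (\<forall>H\<in>F. Zs \<inter> verts H \<noteq> {}) \<and>
            centered G c r' (Zs - ball_nbhd G r' Z)"
proof -
  have LG: "verts L \<subseteq> verts G" using ind unfolding induced_subgraph_def subgraph_def by blast
  have finG: "finite (verts G)" using fin unfolding finite_graph_def by blast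
  have SG: "S \<subseteq> verts G" using S LG by blast
  have finS: "finite S" using finite_subset[OF SG finG] .
  obtain WZ where WZ: "finite WZ" "WZ \<subseteq> verts G" "real (card WZ) \<le> \<xi>" "Z \<subseteq> ball_nbhd G \<eta> WZ"
    using cZ unfolding centered_def by blast
  let ?Zs = "ball_nbhd G r' Z \<union> ball_nbhd G r' S"
  have sub: "ball_nbhd G r' S \<subseteq> verts L \<union> ball_nbhd G r' Z"
  proof
    fix x assume x: "x \<in> ball_nbhd G r' S"
    then obtain s xs where s: "s \<in> S" and xs: "walk G xs" "hd xs = x" "last xs = s" "real (length xs - 1) \<le> r'"
      and xG: "x \<in> verts G"
      unfolding ball_nbhd_def dist_le_def by blast
    show "x \<in> verts L \<union> ball_nbhd G r' Z"
    proof (cases "x \<in> verts L")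
      case True then show ?thesis by blast
    next
      case False
      have ne: "xs \<noteq> []" using xs(1) by (simp add: walk_def)
      have "\<not> (hd xs \<in> verts L)" using False xs(2) by simp
      moreover have "last xs \<in> verts L" using xs(3) s S by auto
      ultimately obtain i where i: "Suc i < length xs" "xs ! i \<notin> verts L" "xs ! Suc i \<in> verts L"
        using first_change[of xs "\<lambda>x. x \<in> verts L"] ne by auto
      have e: "{xs ! i, xs ! Suc i} \<in> edges G" using walk_edge[OF xs(1) i(1)] .
      have il: "i < length xs" using i(1) by simp
      have g: "xs ! i \<in> verts G" "xs ! Suc i \<in> verts G" using walk_verts[OF xs(1)] i(1) il by auto
      have "dist_le G (xs ! i) (xs ! Suc i) 1" using edge_dist[OF e g] .
      then have "xs ! i \<in> ball_nbhd G 1 (verts L)" using g(1) i(3) unfolding ball_nbhd_def by blast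
      then have z: "xs ! i \<in> Z" using nb i(2) unfolding open_nbhd_def by blast
      have d: "dist_le G x (xs ! i) (real i)" using conjunct1[OF dist_split[OF xs(1) il]] xs(2) by simp
      have "i \<le> length xs - 1" using i(1) by simp
      then have "real i \<le> real (length xs - 1)" by simp
      then have "real i \<le> r'" using xs(4) by linarith
      then have "dist_le G x (xs ! i) r'" using dist_le_mono[OF d] by blast
      then have "x \<in> ball_nbhd G r' Z" using z xG unfolding ball_nbhd_def by blast
      then show ?thesis by blast
    qed
  qed
  show ?thesis
  proof (intro exI[of _ ?Zs] conjI)
    show "ball_nbhd G r' Z \<subseteq> ?Zs" by blast
    show "?Zs \<subseteq> verts L \<union> ball_nbhd G r' Z" using sub by blast
    show "centered G (\<xi> + c) (\<eta> + r') ?Zs" unfolding centered_def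
    proof (intro exI[of _ "WZ \<union> S"] conjI)
      show "finite (WZ \<union> S)" using WZ(1) finS by simp
      show "WZ \<union> S \<subseteq> verts G" using WZ(2) SG by simp
      have "card (WZ \<union> S) \<le> card WZ + card S" by (rule card_Un_le)
      then have "real (card (WZ \<union> S)) \<le> real (card WZ) + real (card S)"
        by (metis of_nat_add of_nat_le_iff)
      then show "real (card (WZ \<union> S)) \<le> \<xi> + c" using WZ(3) cS by linarith
      have "ball_nbhd G r' Z \<subseteq> ball_nbhd G (\<eta> + r') WZ" using ball_ball[OF WZ(4)] .
      moreover have "ball_nbhd G r' S \<subseteq> ball_nbhd G (\<eta> + r') S" using ball_mono_rad[of r' "\<eta> + r'"] eta by simp
      ultimately show "?Zs \<subseteq> ball_nbhd G (\<eta> + r') (WZ \<union> S)"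
        using ball_mono_set[of WZ "WZ \<union> S"] ball_mono_set[of S "WZ \<union> S"] by blast
    qed
    show "\<forall>H\<in>F. ?Zs \<inter> verts H \<noteq> {}" using hit by blast
    show "centered G c r' (?Zs - ball_nbhd G r' Z)" unfolding centered_def
      using finS SG cS by (intro exI[of _ S]) blast
  qed
qed


theorem lemma3p1:
  fixes G L :: "'a graph" and F :: "'a graph set" and k \<theta> :: nat
    and r r' \<xi> \<eta> :: real and Z :: "'a set"
  assumes "finite_graph G"
    and "induced_subgraph L G"
    and "\<forall>H\<in>F. subgraph H L \<and> connected_graph H"
    and "r \<ge> 0" "r' \<ge> 0" "\<xi> \<ge> 0" "\<eta> \<ge> 0" "r' \<ge> r / 2"
    and "Z \<subseteq> verts G" "open_nbhd G (verts L) \<subseteq> Z" "centered G \<xi> \<eta> Z"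
    and "\<not> contains_far_members G L F k r"
  shows "(\<exists>Zs. ball_nbhd G r' Z \<subseteq> Zs \<and> Zs \<subseteq> verts L \<union> ball_nbhd G r' Z \<and>
            centered G (\<xi> + 3 * real \<theta> - 3) (\<eta> + r') Zs \<and>
            (\<forall>H\<in>F. Zs \<inter> verts H \<noteq> {}) \<and>
            centered G (3 * real \<theta> - 3) r' (Zs - ball_nbhd G r' Z))
       \<or> (\<exists>A B. separation L A B \<and> sep_order A B < \<theta> \<and>
            \<not> contains_far_members G (del_verts A (ball_nbhd G r' (verts A \<inter> verts B)))
                 (fam_minus F (ball_nbhd G r' Z)) (k - 1) r \<and>
            \<not> contains_far_members G (del_verts B (ball_nbhd G r' (verts A \<inter> verts B)))
                 (fam_minus F (ball_nbhd G r' Z)) (k - 1) r)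
       \<or> tangle L \<theta> {(A, B). separation L A B \<and> sep_order A B < \<theta> \<and>
            \<not> contains_member (del_verts A (ball_nbhd G r' (verts A \<inter> verts B))) (fam_minus F (ball_nbhd G r' Z)) \<and>
            contains_member (del_verts B (ball_nbhd G r' (verts A \<inter> verts B))) (fam_minus F (ball_nbhd G r' Z))}"
    (is "?D1 \<or> ?D2 \<or> tangle L \<theta> ?T")
proof -
  let ?BZ = "ball_nbhd G r' Z"
  let ?F' = "fam_minus F ?BZ"
  define T where "T = ?T"
  have LG: "verts L \<subseteq> verts G" using assms(2) unfolding induced_subgraph_def subgraph_def by blast
  have finG: "finite (verts G)" using assms(1) unfolding finite_graph_def by blast
  have k1: "k \<ge> 1"
  proof (rule ccontr)
    assume "\<not> k \<ge> 1" then have "k = 0" by simp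
    then have "contains_far_members G L F k r" unfolding contains_far_members_def
      by (intro exI[of _ "{}"]) simp
    then show False using assms(12) by blast
  qed
  have FF: "H \<in> F" if "H \<in> ?F'" for H using that unfolding fam_minus_def by blast
  have sepG: "verts A \<inter> verts B \<subseteq> verts G" if "separation L A B" for A B
    using sep_facts(1)[OF that] LG by blast
  have sepL: "verts A \<inter> verts B \<subseteq> verts L" if "separation L A B" for A B
    using sep_facts(1)[OF that] by blast
  have Tmem: "separation L A B \<and> sep_order A B < \<theta> \<and>
            \<not> contains_member (del_verts A (ball_nbhd G r' (verts A \<inter> verts B))) ?F' \<and>
            contains_member (del_verts B (ball_nbhd G r' (verts A \<inter> verts B))) ?F'"
    if "(A, B) \<in> T" for A B using that unfolding T_def by blast
  show ?thesis
  proof (cases "\<theta> = 0")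
    case True
    have "tangle L \<theta> T" unfolding tangle_def T_def using True by auto
    then show ?thesis unfolding T_def by blast
  next
    case False
    then have th: "\<theta> \<ge> 1" by simp
    have O1: "?D1" if S: "S \<subseteq> verts L" and cS: "real (card S) \<le> 3 * real \<theta> - 3"
      and hit: "\<forall>H\<in>F. verts H \<inter> ?BZ = {} \<longrightarrow> verts H \<inter> ball_nbhd G r' S \<noteq> {}" for S
      using outcome1[OF assms(1,2,5,7,10,11) S cS hit] by (simp only: add_diff_eq)
    have T4: "\<forall>(A,B)\<in>T. verts A \<noteq> verts L"
    proof (clarify)
      fix A B assume AB: "(A, B) \<in> T" and eq: "verts A = verts L"
      then obtain H where H: "H \<in> ?F'" "subgraph H (del_verts B (ball_nbhd G r' (verts A \<inter> verts B)))"
        using Tmem[OF AB] unfolding contains_member_def by blast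
      have sep: "separation L A B" using Tmem[OF AB] by blast
      have "verts B \<subseteq> verts A \<inter> verts B" using sep_facts(1)[OF sep] eq by blast
      moreover have "verts A \<inter> verts B \<subseteq> ball_nbhd G r' (verts A \<inter> verts B)"
        using ball_self[OF sepG[OF sep] assms(5)] .
      ultimately have "verts H = {}" using H(2) unfolding subgraph_def by auto
      moreover have "verts H \<noteq> {}" using assms(3) FF[OF H(1)] unfolding connected_graph_def by blast
      ultimately show False by blast
    qed
    have T1: "\<forall>(A,B)\<in>T. separation L A B \<and> sep_order A B < \<theta>" using Tmem by blast
    show ?thesis
    proof (cases "tangle L \<theta> T")
      case True then show ?thesis unfolding T_def by blast
    next
      case nt: False
      have "\<not> (\<forall>A B. separation L A B \<and> sep_order A B < \<theta> \<longrightarrow> (A,B) \<in> T \<or> (B,A) \<in> T) \<or>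
            \<not> (\<forall>A1 B1 A2 B2 A3 B3. (A1,B1) \<in> T \<and> (A2,B2) \<in> T \<and> (A3,B3) \<in> T \<longrightarrow>
        graph_union (graph_union A1 A2) A3 \<noteq> L)"
        using nt T4 T1 unfolding tangle_def by blast
      then show ?thesis
      proof
        assume "\<not> (\<forall>A B. separation L A B \<and> sep_order A B < \<theta> \<longrightarrow> (A,B) \<in> T \<or> (B,A) \<in> T)"
        then obtain A B where AB: "separation L A B" "sep_order A B < \<theta>" "(A,B) \<notin> T" "(B,A) \<notin> T"
          by blast
        let ?S = "verts A \<inter> verts B"
        let ?N = "ball_nbhd G r' ?S"
        have sBA: "separation L B A" using sep_facts(5)[OF AB(1)] .
        have SS: "verts B \<inter> verts A = ?S" by blast
        have "sep_order B A < \<theta>" using AB(2) SS unfolding sep_order_def by simp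
        then have eq: "contains_member (del_verts A ?N) ?F' \<longleftrightarrow> contains_member (del_verts B ?N) ?F'"
          using AB sBA SS unfolding T_def by auto
        show ?thesis
        proof (cases "contains_member (del_verts A ?N) ?F'")
          case True
          then have cB: "contains_member (del_verts B ?N) ?F'" using eq by blast
          have nA: "\<not> contains_far_members G (del_verts A ?N) ?F' (k - 1) r"
            using combine[OF assms(2) AB(1) assms(10) assms(8) assms(5) sepG[OF AB(1)] assms(3) k1 _ cB]
              assms(12) by blast
          have c2: "contains_far_members G (del_verts B (ball_nbhd G r' (verts B \<inter> verts A))) ?F' (k - 1) r \<Longrightarrow>
              contains_member (del_verts A (ball_nbhd G r' (verts B \<inter> verts A))) ?F' \<Longrightarrow>
              contains_far_members G L F k r"
            by (rule combine[OF assms(2) sBA assms(10) assms(8) assms(5) sepG[OF sBA] assms(3) k1])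
          have nB: "\<not> contains_far_members G (del_verts B ?N) ?F' (k - 1) r"
            using c2[unfolded SS] True assms(12) by blast
          show ?thesis using AB(1,2) nA nB by blast
        next
          case False
          then have nB: "\<not> contains_member (del_verts B ?N) ?F'" using eq by blast
          have "card ?S < \<theta>" using AB(2) unfolding sep_order_def .
          then have "real (card ?S) \<le> real \<theta> - 1" by linarith
          then have cS: "real (card ?S) \<le> 3 * real \<theta> - 3" using th by linarith
          have hit: "\<forall>H\<in>F. verts H \<inter> ?BZ = {} \<longrightarrow> verts H \<inter> ?N \<noteq> {}"
          proof (intro ballI impI notI)
            fix H assume H: "H \<in> F" "verts H \<inter> ?BZ = {}" "verts H \<inter> ?N = {}"
            have HF': "H \<in> ?F'" using H unfolding fam_minus_def by blast
            have "subgraph H (del_verts A ?N) \<or> subgraph H (del_verts B ?N)"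
              using side[OF AB(1) _ _ ball_self[OF sepG[OF AB(1)] assms(5)] H(3)] assms(3) H(1) by blast
            then show False using False nB HF' unfolding contains_member_def by blast
          qed
          show ?thesis using O1[OF sepL[OF AB(1)] cS hit] by blast
        qed
      next
        assume "\<not> (\<forall>A1 B1 A2 B2 A3 B3. (A1,B1) \<in> T \<and> (A2,B2) \<in> T \<and> (A3,B3) \<in> T \<longrightarrow>
          graph_union (graph_union A1 A2) A3 \<noteq> L)"
        then obtain A1 B1 A2 B2 A3 B3 where t: "(A1,B1) \<in> T" "(A2,B2) \<in> T" "(A3,B3) \<in> T"
          "graph_union (graph_union A1 A2) A3 = L" by blast
        let ?S = "(verts A1 \<inter> verts B1) \<union> (verts A2 \<inter> verts B2) \<union> (verts A3 \<inter> verts B3)"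
        have s: "separation L A1 B1" "separation L A2 B2" "separation L A3 B3" using t Tmem by blast+
        have SL: "?S \<subseteq> verts L" using sepL[OF s(1)] sepL[OF s(2)] sepL[OF s(3)] by blast
        have c: "card (verts A1 \<inter> verts B1) < \<theta>" "card (verts A2 \<inter> verts B2) < \<theta>"
          "card (verts A3 \<inter> verts B3) < \<theta>" using t Tmem unfolding sep_order_def by blast+
        have "card ?S \<le> card (verts A1 \<inter> verts B1) + card (verts A2 \<inter> verts B2) + card (verts A3 \<inter> verts B3)"
          by (meson add_le_mono card_Un_le le_trans order_refl)
        then have "real (card ?S) \<le> real (card (verts A1 \<inter> verts B1)) + real (card (verts A2 \<inter> verts B2))
            + real (card (verts A3 \<inter> verts B3))" by (metis of_nat_add of_nat_le_iff)
        moreover have "real (card (verts A1 \<inter> verts B1)) \<le> real \<theta> - 1"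
          "real (card (verts A2 \<inter> verts B2)) \<le> real \<theta> - 1"
          "real (card (verts A3 \<inter> verts B3)) \<le> real \<theta> - 1" using c by linarith+
        ultimately have cS: "real (card ?S) \<le> 3 * real \<theta> - 3" by linarith
        have VL: "verts L = verts A1 \<union> verts A2 \<union> verts A3"
        proof -
          have "verts (graph_union (graph_union A1 A2) A3) = verts A1 \<union> verts A2 \<union> verts A3"
            by (simp add: graph_union_def verts_def)
          then show ?thesis using t(4) by simp
        qed
        have hit: "\<forall>H\<in>F. verts H \<inter> ?BZ = {} \<longrightarrow> verts H \<inter> ball_nbhd G r' ?S \<noteq> {}"
        proof (intro ballI impI notI)
          fix H assume H: "H \<in> F" "verts H \<inter> ?BZ = {}" "verts H \<inter> ball_nbhd G r' ?S = {}"
          have HF': "H \<in> ?F'" using H unfolding fam_minus_def by blast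
          have HL: "subgraph H L" "connected_graph H" using assms(3) H(1) by auto
          have inB: "verts H \<subseteq> verts B' - ball_nbhd G r' (verts A' \<inter> verts B')"
            if AB': "(A', B') \<in> T" "verts A' \<inter> verts B' \<subseteq> ?S" for A' B'
          proof -
            have sp: "separation L A' B'" using Tmem[OF AB'(1)] by blast
            have "ball_nbhd G r' (verts A' \<inter> verts B') \<subseteq> ball_nbhd G r' ?S"
              using ball_mono_set[OF AB'(2)] .
            then have dis: "verts H \<inter> ball_nbhd G r' (verts A' \<inter> verts B') = {}" using H(3) by blast
            have "subgraph H (del_verts A' (ball_nbhd G r' (verts A' \<inter> verts B'))) \<or>
                  subgraph H (del_verts B' (ball_nbhd G r' (verts A' \<inter> verts B')))"
              using side[OF sp HL ball_self[OF sepG[OF sp] assms(5)] dis] .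
            moreover have "\<not> subgraph H (del_verts A' (ball_nbhd G r' (verts A' \<inter> verts B')))"
              using Tmem[OF AB'(1)] HF' unfolding contains_member_def by blast
            ultimately show ?thesis unfolding subgraph_def by auto
          qed
          obtain h0 where h0: "h0 \<in> verts H" using HL(2) unfolding connected_graph_def by blast
          have "h0 \<in> verts L" using h0 HL(1) unfolding subgraph_def by blast
          then have "h0 \<in> verts A1 \<or> h0 \<in> verts A2 \<or> h0 \<in> verts A3" using VL by blast
          moreover have "h0 \<in> verts B1 - ball_nbhd G r' (verts A1 \<inter> verts B1)" using inB[OF t(1)] h0 by blast
          moreover have "h0 \<in> verts B2 - ball_nbhd G r' (verts A2 \<inter> verts B2)" using inB[OF t(2)] h0 by blast
          moreover have "h0 \<in> verts B3 - ball_nbhd G r' (verts A3 \<inter> verts B3)" using inB[OF t(3)] h0 by blast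
          moreover have "verts A1 \<inter> verts B1 \<subseteq> ball_nbhd G r' (verts A1 \<inter> verts B1)"
            "verts A2 \<inter> verts B2 \<subseteq> ball_nbhd G r' (verts A2 \<inter> verts B2)"
            "verts A3 \<inter> verts B3 \<subseteq> ball_nbhd G r' (verts A3 \<inter> verts B3)"
            using ball_self[OF sepG[OF s(1)] assms(5)] ball_self[OF sepG[OF s(2)] assms(5)]
              ball_self[OF sepG[OF s(3)] assms(5)] by auto
          ultimately show False by blast
        qed
        show ?thesis using O1[OF SL cS hit] by blast
      qed
    qed
  qed
qed

end
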